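(* Let $t$ be a table with $n$ rows, and fix a predicate such that exactly $pn$ rows of $t$ satisfy it, where $p\in(0,1]$. Draw a sample of $k\ge 1$ rows from $t$ uniformly at random with replacement (i.e., $k$ i.i.d. uniform draws), let $\hat X$ be the number of sampled rows satisfying the predicate, and estimate the cardinality by $\mathrm{est}=\frac{n}{k}\hat X$, the true cardinality being $\mathrm{true}=pn$. Let $\sigma^2=p(1-p)$. Then for every $q\ge 1$, $$\mathbb{P}(\text{Q-error}\le q)\ \ge\ 1-\Omega-\Psi,$$ where $$\Omega=\min\Bigg(\Big(\frac{e^{q-1}}{q^{q}}\Big)^{pk},\ \exp\Big(-\frac{k(pq-p)^2}{2\sigma^2+2(pq-p)/3}\Big)\Bigg),$$ $$\Psi=\min\Bigg(\Big(e^{\frac1q-1}\,q^{\frac1q}\Big)^{pk},\ \exp\Big(-\frac{k(p-p/q)^2}{2\sigma^2+2(p-p/q)/3}\Big)\Bigg).$$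
   Context: The Q-error of an estimate is $\max\big(\frac{\mathrm{true}'}{\mathrm{est}'},\frac{\mathrm{est}'}{\mathrm{true}'}\big)$, where $\mathrm{est}'=\max(\mathrm{est},1)$ and $\mathrm{true}'=\max(\mathrm{true},1)$ (to avoid division by zero). $\Omega$ bounds the probability of over-estimation ($\mathrm{est}\ge q\cdot\mathrm{true}$) and $\Psi$ the probability of under-estimation ($\mathrm{est}\le \mathrm{true}/q$). *)

theory Defs
  imports "HOL-Probability.Probability"
begin

definition qerror :: "real \<Rightarrow> real \<Rightarrow> real" where
  "qerror est tru = max (max tru 1 / max est 1) (max est 1 / max tru 1)"

definition sample_wr :: "nat \<Rightarrow> nat \<Rightarrow> (nat \<Rightarrow> nat) pmf" where
  "sample_wr n k = Pi_pmf {..<k} 0 (\<lambda>_. pmf_of_set {..<n})"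

definition hits :: "(nat \<Rightarrow> 'a) \<Rightarrow> ('a \<Rightarrow> bool) \<Rightarrow> nat \<Rightarrow> (nat \<Rightarrow> nat) \<Rightarrow> nat" where
  "hits t P k s = card {j \<in> {..<k}. P (t (s j))}"

definition Omega_bound :: "real \<Rightarrow> real \<Rightarrow> nat \<Rightarrow> real" where
  "Omega_bound p q k =
     (let \<sigma>2 = p * (1 - p); d = p * q - p in
      min ((exp (q - 1) / q powr q) powr (p * real k))
          (exp (- (real k * d\<^sup>2) / (2 * \<sigma>2 + 2 * d / 3))))"

definition Psi_bound :: "real \<Rightarrow> real \<Rightarrow> nat \<Rightarrow> real" where
  "Psi_bound p q k =
     (let \<sigma>2 = p * (1 - p); d = p - p / q in
      min ((exp (1 / q - 1) * q powr (1 / q)) powr (p * real k))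
          (exp (- (real k * d\<^sup>2) / (2 * \<sigma>2 + 2 * d / 3))))"

end

theory Submission
  imports Defs
begin


lemma exp_series_shift2:
  fixes x :: real
  shows "(\<lambda>i. x^(i+2) / fact (i+2)) sums (exp x - 1 - x)"
proof -
  have "(\<lambda>n. x^n / fact n) sums exp x"
    using exp_converges[of x] by (simp add: divide_inverse mult.commute)
  hence "(\<lambda>i. x^(i+2) / fact (i+2)) sums (exp x - (\<Sum>i<2. x^i / fact i))"
    by (subst sums_iff_shift) simp
  thus ?thesis by (simp add: numeral_2_eq_2 diff_diff_eq)
qed

lemma fact_ge_pow3: "2 * 3^i \<le> (fact (i+2) :: real)"
proof (induction i)
  case 0 then show ?case by simp
next
  case (Suc i)
  have "fact (Suc i + 2) = real (i+3) * (fact (i+2) :: real)"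
    by (simp add: fact_Suc algebra_simps numeral_3_eq_3)
  moreover have "real (i+3) * fact (i+2) \<ge> 3 * (fact (i+2) :: real)"
    by (intro mult_right_mono) auto
  moreover have "2 * 3 ^ Suc i = 3 * (2 * (3::real) ^ i)" by simp
  moreover have "3 * (2 * (3::real) ^ i) \<le> 3 * fact (i+2)" using Suc.IH by (rule mult_left_mono) simp
  ultimately show ?case by linarith
qed

lemma L1:
  fixes l z :: real
  assumes "l \<ge> 0" "\<bar>z\<bar> \<le> 1"
  shows "exp (l*z) \<le> 1 + l*z + z^2 * (exp l - 1 - l)"
proof -
  have a: "(\<lambda>i. (l*z)^(i+2) / fact (i+2)) sums (exp (l*z) - 1 - l*z)"
    by (rule exp_series_shift2)
  have b: "(\<lambda>i. z^2 * (l^(i+2) / fact (i+2))) sums (z^2 * (exp l - 1 - l))"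
    by (intro sums_mult exp_series_shift2)
  have "(l*z)^(i+2) / fact (i+2) \<le> z^2 * (l^(i+2) / fact (i+2))" for i
  proof -
    have "(l*z)^(i+2) \<le> \<bar>l*z\<bar>^(i+2)" by (metis abs_ge_self power_abs)
    also have "\<dots> = \<bar>z\<bar>^i * z^2 * l^(i+2)"
      using assms by (simp add: abs_mult power_mult_distrib power_add power2_eq_square)
    also have "\<dots> \<le> 1 * z^2 * l^(i+2)"
      using assms by (intro mult_right_mono power_le_one) auto
    finally show ?thesis by (simp add: divide_right_mono)
  qed
  hence "exp (l*z) - 1 - l*z \<le> z^2 * (exp l - 1 - l)"
    using sums_le[OF _ a b] by blast
  thus ?thesis by simp
qed

lemma L2:
  fixes l :: real
  assumes "0 \<le> l" "l < 3"
  shows "exp l - 1 - l \<le> l^2 / (2 * (1 - l/3))"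
proof -
  have a: "(\<lambda>i. l^(i+2) / fact (i+2)) sums (exp l - 1 - l)"
    by (rule exp_series_shift2)
  have g: "(\<lambda>i. (l/3)^i) sums (1 / (1 - l/3))"
    using assms by (intro geometric_sums) auto
  have b: "(\<lambda>i. l^2/2 * (l/3)^i) sums (l^2/2 * (1 / (1 - l/3)))"
    by (intro sums_mult g)
  have "l^(i+2) / fact (i+2) \<le> l^2/2 * (l/3)^i" for i
  proof -
    have "l^(i+2) / fact (i+2) \<le> l^(i+2) / (2*3^i)"
      using assms fact_ge_pow3[of i] by (intro divide_left_mono) auto
    also have "\<dots> = l^2/2 * (l/3)^i" by (simp add: power_add power_divide power2_eq_square)
    finally show ?thesis .
  qed
  hence "exp l - 1 - l \<le> l^2/2 * (1 / (1 - l/3))"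
    using sums_le[OF _ a b] by blast
  thus ?thesis by simp
qed



lemma hits_le: "hits t P k s \<le> k"
  unfolding hits_def by (rule order_trans[OF card_mono[of "{..<k}"]]) auto

lemma exp_hits:
  "exp (l * real (hits t P k s)) = (\<Prod>j\<in>{..<k}. exp (l * (if P (t (s j)) then 1 else 0)))"
proof -
  have "real (hits t P k s) = (\<Sum>j\<in>{..<k}. (if P (t (s j)) then 1 else 0))"
    unfolding hits_def by (simp add: sum.If_cases Int_def lessThan_def)
  thus ?thesis by (simp add: sum_distrib_left exp_sum)
qed

lemma mgf_hits:
  assumes "n > 0" and c: "real (card {i \<in> {..<n}. P (t i)}) = p * real n"
  shows "measure_pmf.expectation (sample_wr n k) (\<lambda>s. exp (l * real (hits t P k s)))
          = (1 - p + p * exp l) ^ k"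
proof -
  have "measure_pmf.expectation (sample_wr n k) (\<lambda>s. exp (l * real (hits t P k s)))
     = measure_pmf.expectation (sample_wr n k) (\<lambda>s. \<Prod>j\<in>{..<k}. exp (l * (if P (t (s j)) then 1 else 0)))"
    by (simp only: exp_hits)
  also have "\<dots> = (\<Prod>j\<in>{..<k}. measure_pmf.expectation (pmf_of_set {..<n}) (\<lambda>v. exp (l * (if P (t v) then 1 else 0))))"
    unfolding sample_wr_def
    by (rule expectation_prod_Pi_pmf) (auto intro!: integrable_measure_pmf_finite simp: assms set_pmf_of_set lessThan_empty_iff)
  also have "measure_pmf.expectation (pmf_of_set {..<n}) (\<lambda>v. exp (l * (if P (t v) then 1 else 0 :: real)))
       = 1 - p + p * exp l"
  proof -
    have "measure_pmf.expectation (pmf_of_set {..<n}) (\<lambda>v. exp (l * (if P (t v) then 1 else 0 :: real)))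
       = (\<Sum>v<n. exp (l * (if P (t v) then 1 else 0 :: real))) / n"
      using assms by (subst integral_pmf_of_set) auto
    also have "(\<Sum>v<n. exp (l * (if P (t v) then 1 else 0 :: real))) = (\<Sum>v<n. 1 + (if P (t v) then exp l - 1 else 0))"
      by (intro sum.cong) auto
    also have "\<dots> = n + (exp l - 1) * card {i \<in> {..<n}. P (t i)}"
      by (simp add: sum.distrib sum.If_cases Int_def lessThan_def)
    also have "\<dots> = n * (1 - p + p * exp l)" using c by (simp add: algebra_simps)
    finally show ?thesis using assms by simp
  qed
  finally show ?thesis by simp
qed

lemma integrable_exp_hits:
  "integrable (measure_pmf (sample_wr n k)) (\<lambda>s. exp (l * real (hits t P k s)))"
proof (rule measure_pmf.integrable_const_bound[where B = "exp (\<bar>l\<bar> * k)"])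
  show "AE x in measure_pmf (sample_wr n k). norm (exp (l * real (hits t P k x))) \<le> exp (\<bar>l\<bar> * k)"
  proof (intro AE_pmfI)
    fix x
    have "l * real (hits t P k x) \<le> \<bar>l\<bar> * real (hits t P k x)"
      by (intro mult_right_mono) auto
    also have "\<dots> \<le> \<bar>l\<bar> * k"
      using hits_le[of t P k x] by (intro mult_left_mono) auto
    finally have "l * real (hits t P k x) \<le> \<bar>l\<bar> * k" .
    thus "norm (exp (l * real (hits t P k x))) \<le> exp (\<bar>l\<bar> * k)" by simp
  qed
qed simp

lemma markov_ge:
  assumes "n > 0" and c: "real (card {i \<in> {..<n}. P (t i)}) = p * real n" and "l > 0"
  shows "measure_pmf.prob (sample_wr n k) {s. real (hits t P k s) \<ge> a}
          \<le> exp (- l * a) * (1 - p + p * exp l) ^ k"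
proof -
  have "measure_pmf.prob (sample_wr n k) {s \<in> UNIV. real (hits t P k s) \<ge> a}
     \<le> exp (- l * a) * (\<integral>s\<in>UNIV. exp (l * real (hits t P k s)) \<partial>measure_pmf (sample_wr n k))"
    by (rule measure_pmf.Chernoff_ineq_ge)
       (auto simp: assms set_integrable_def intro: integrable_exp_hits)
  thus ?thesis using mgf_hits[where l=l and k=k and n=n and P=P and t=t and p=p, OF assms(1,2)] by (simp add: set_lebesgue_integral_def)
qed

lemma markov_le:
  assumes "n > 0" and c: "real (card {i \<in> {..<n}. P (t i)}) = p * real n" and "l > 0"
  shows "measure_pmf.prob (sample_wr n k) {s. real (hits t P k s) \<le> a}
          \<le> exp (l * a) * (1 - p + p * exp (- l)) ^ k"
proof -
  have "measure_pmf.prob (sample_wr n k) {s \<in> UNIV. real (hits t P k s) \<le> a}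
     \<le> exp (l * a) * (\<integral>s\<in>UNIV. exp (- l * real (hits t P k s)) \<partial>measure_pmf (sample_wr n k))"
    by (rule measure_pmf.Chernoff_ineq_le)
       (auto simp: assms set_integrable_def intro: integrable_exp_hits[where l="-l", simplified])
  thus ?thesis using mgf_hits[where l="-l" and k=k and n=n and P=P and t=t and p=p, OF assms(1,2)] by (simp add: set_lebesgue_integral_def)
qed



lemma L3a:
  fixes p l :: real
  assumes "0 \<le> p" "p \<le> 1" "l \<ge> 0"
  shows "1 - p + p * exp l \<le> exp (l*p) * exp (p*(1-p) * (exp l - 1 - l))"
proof -
  have e1: "exp (l*(-p)) \<le> 1 + l*(-p) + (-p)^2 * (exp l - 1 - l)"
    using assms by (intro L1) auto
  have e2: "exp (l*(1-p)) \<le> 1 + l*(1-p) + (1-p)^2 * (exp l - 1 - l)"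
    using assms by (intro L1) auto
  have "(1-p) * exp (l*(-p)) + p * exp (l*(1-p)) \<le>
        (1-p) * (1 + l*(-p) + (-p)^2 * (exp l - 1 - l)) + p * (1 + l*(1-p) + (1-p)^2 * (exp l - 1 - l))"
    using assms e1 e2 by (intro add_mono mult_left_mono) auto
  also have "\<dots> = 1 + p*(1-p) * (exp l - 1 - l)" by (simp add: algebra_simps power2_eq_square)
  also have "\<dots> \<le> exp (p*(1-p) * (exp l - 1 - l))" by (rule exp_ge_add_one_self)
  finally have *: "(1-p) * exp (l*(-p)) + p * exp (l*(1-p)) \<le> exp (p*(1-p) * (exp l - 1 - l))" .
  have "1 - p + p * exp l = exp (l*p) * ((1-p) * exp (l*(-p)) + p * exp (l*(1-p)))"
  proof -
    have e1: "exp (l*p) * exp (l*(-p)) = 1" by (simp flip: exp_add)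
    have e2: "exp (l*p) * exp (l*(1-p)) = exp l" by (simp add: right_diff_distrib flip: exp_add)
    have "exp (l*p) * ((1-p) * exp (l*(-p)) + p * exp (l*(1-p)))
        = (1-p) * (exp (l*p) * exp (l*(-p))) + p * (exp (l*p) * exp (l*(1-p)))"
      by (simp only: distrib_left mult.left_commute)
    also have "\<dots> = 1 - p + p * exp l" by (simp only: e1 e2 mult_1_right)
    finally show ?thesis by simp
  qed
  also have "\<dots> \<le> exp (l*p) * exp (p*(1-p) * (exp l - 1 - l))"
    using * by (intro mult_left_mono) auto
  finally show ?thesis .
qed

lemma L3b:
  fixes p l :: real
  assumes "0 \<le> p" "p \<le> 1" "l \<ge> 0"
  shows "1 - p + p * exp (-l) \<le> exp (-l*p) * exp (p*(1-p) * (exp l - 1 - l))"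
proof -
  have e1: "exp (l*p) \<le> 1 + l*p + p^2 * (exp l - 1 - l)"
    using assms by (intro L1) auto
  have e2: "exp (l*(-(1-p))) \<le> 1 + l*(-(1-p)) + (-(1-p))^2 * (exp l - 1 - l)"
    using assms by (intro L1) auto
  have "(1-p) * exp (l*p) + p * exp (l*(-(1-p))) \<le>
        (1-p) * (1 + l*p + p^2 * (exp l - 1 - l)) + p * (1 + l*(-(1-p)) + (-(1-p))^2 * (exp l - 1 - l))"
    using assms e1 e2 by (intro add_mono mult_left_mono) auto
  also have "\<dots> = 1 + p*(1-p) * (exp l - 1 - l)" by (simp add: algebra_simps power2_eq_square)
  also have "\<dots> \<le> exp (p*(1-p) * (exp l - 1 - l))" by (rule exp_ge_add_one_self)
  finally have *: "(1-p) * exp (l*p) + p * exp (l*(-(1-p))) \<le> exp (p*(1-p) * (exp l - 1 - l))" .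
  have "1 - p + p * exp (-l) = exp (-l*p) * ((1-p) * exp (l*p) + p * exp (l*(-(1-p))))"
  proof -
    have e1: "exp (-l*p) * exp (l*p) = 1" by (simp flip: exp_add)
    have e2: "exp (-l*p) * exp (l*(-(1-p))) = exp (-l)" by (simp add: right_diff_distrib flip: exp_add)
    have "exp (-l*p) * ((1-p) * exp (l*p) + p * exp (l*(-(1-p))))
        = (1-p) * (exp (-l*p) * exp (l*p)) + p * (exp (-l*p) * exp (l*(-(1-p))))"
      by (simp only: distrib_left mult.left_commute)
    also have "\<dots> = 1 - p + p * exp (-l)" by (simp only: e1 e2 mult_1_right)
    finally show ?thesis by simp
  qed
  also have "\<dots> \<le> exp (-l*p) * exp (p*(1-p) * (exp l - 1 - l))"
    using * by (intro mult_left_mono) auto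
  finally show ?thesis .
qed

lemma Lexp:
  fixes w d :: real
  assumes "w \<ge> 0" "d > 0"
  shows "w * (exp (d/(w+d/3)) - 1 - d/(w+d/3)) - d/(w+d/3) * d \<le> - (d^2 / (2*w + 2*d/3))"
proof (cases "w = 0")
  case True
  have "d / (d/3) = 3" using assms by simp
  then show ?thesis using True assms by (simp add: power2_eq_square)
next
  case False
  define l where "l = d/(w+d/3)"
  have sp: "w > 0" using False assms by simp
  have l0: "0 \<le> l" using assms unfolding l_def by simp
  have l3: "l < 3" using sp assms unfolding l_def by (simp add: divide_less_eq)
  have "w * (exp l - 1 - l) \<le> w * (l^2 / (2 * (1 - l/3)))"
    using L2[OF l0 l3] sp by (intro mult_left_mono) auto
  also have "w * (l^2 / (2 * (1 - l/3))) = l * d / 2"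
  proof -
    have pos: "w + d/3 > 0" using sp assms by simp
    have "1 - l/3 = w/(w+d/3)" using pos unfolding l_def by (simp add: field_simps)
    hence "w * (l^2 / (2 * (1 - l/3))) = w * (l^2 / (2 * (w/(w+d/3))))" by simp
    also have "\<dots> = l^2 * (w + d/3) / 2" using sp pos by (simp add: field_simps)
    also have "\<dots> = l * (l * (w + d/3)) / 2" by (simp add: power2_eq_square)
    also have "l * (w + d/3) = d" using pos unfolding l_def by simp
    finally show ?thesis by simp
  qed
  finally have "w * (exp l - 1 - l) - l * d \<le> - (l * d / 2)" by simp
  also have "l * d / 2 = d^2 / (2*w + 2*d/3)"
    using sp assms unfolding l_def by (simp add: field_simps power2_eq_square)
  finally show ?thesis unfolding l_def by simp
qed



lemma T1:
  assumes "n > 0" and c: "real (card {i \<in> {..<n}. P (t i)}) = p * real n"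
    and "0 < p" "p \<le> 1" "q > 1"
  shows "measure_pmf.prob (sample_wr n k) {s. real (hits t P k s) \<ge> q * p * k}
          \<le> (exp (q - 1) / q powr q) powr (p * real k)"
proof -
  have lq: "ln q > 0" using assms by simp
  have "measure_pmf.prob (sample_wr n k) {s. real (hits t P k s) \<ge> q * p * k}
      \<le> exp (- ln q * (q * p * k)) * (1 - p + p * exp (ln q)) ^ k"
    by (rule markov_ge[where n=n and P=P and t=t and p=p and k=k, OF assms(1) c lq])
  also have "\<dots> = exp (- ln q * (q * p * k)) * (1 - p + p * q) ^ k"
    using assms by simp
  also have "\<dots> \<le> exp (- ln q * (q * p * k)) * exp (p * (q - 1)) ^ k"
  proof (intro mult_left_mono power_mono)
    show "1 - p + p * q \<le> exp (p * (q - 1))"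
      using exp_ge_add_one_self[of "p * (q - 1)"] by (simp add: algebra_simps)
    have "0 \<le> p * q" using assms by simp
    thus "0 \<le> 1 - p + p * q" using assms by linarith
  qed simp
  also have "exp (- ln q * (q * p * k)) * exp (p * (q - 1)) ^ k = exp (p * k * ((q - 1) - q * ln q))"
  proof -
    have "exp (p * (q - 1)) ^ k = exp (real k * (p * (q - 1)))" by (rule exp_of_nat_mult[symmetric])
    hence "exp (- ln q * (q * p * k)) * exp (p * (q - 1)) ^ k = exp (- ln q * (q * p * k) + real k * (p * (q - 1)))"
      by (simp only: exp_add)
    also have "- ln q * (q * p * k) + real k * (p * (q - 1)) = p * k * ((q - 1) - q * ln q)"
      by (simp add: algebra_simps)
    finally show ?thesis .
  qed
  also have "\<dots> = (exp (q - 1) / q powr q) powr (p * real k)"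
  proof -
    have "ln (exp (q - 1) / q powr q) = (q - 1) - q * ln q"
      using assms by (simp add: ln_div ln_powr)
    thus ?thesis using assms by (simp add: powr_def)
  qed
  finally show ?thesis .
qed

lemma T3:
  assumes "n > 0" and c: "real (card {i \<in> {..<n}. P (t i)}) = p * real n"
    and "0 < p" "p \<le> 1" "q > 1"
  shows "measure_pmf.prob (sample_wr n k) {s. real (hits t P k s) \<le> p * k / q}
          \<le> (exp (1 / q - 1) * q powr (1 / q)) powr (p * real k)"
proof -
  have lq: "ln q > 0" using assms by simp
  have "measure_pmf.prob (sample_wr n k) {s. real (hits t P k s) \<le> p * k / q}
      \<le> exp (ln q * (p * k / q)) * (1 - p + p * exp (- ln q)) ^ k"
    by (rule markov_le[where n=n and P=P and t=t and p=p and k=k, OF assms(1) c lq])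
  also have "\<dots> = exp (ln q * (p * k / q)) * (1 - p + p * (1/q)) ^ k"
    using assms by (simp add: exp_minus inverse_eq_divide)
  also have "\<dots> \<le> exp (ln q * (p * k / q)) * exp (p * (1/q - 1)) ^ k"
  proof (intro mult_left_mono power_mono)
    show "1 - p + p * (1/q) \<le> exp (p * (1/q - 1))"
      using exp_ge_add_one_self[of "p * (1/q - 1)"] by (simp add: algebra_simps)
    have "0 \<le> p * (1/q)" using assms by simp
    thus "0 \<le> 1 - p + p * (1/q)" using assms by linarith
  qed simp
  also have "exp (ln q * (p * k / q)) * exp (p * (1/q - 1)) ^ k = exp (p * k * ((1/q - 1) + ln q / q))"
  proof -
    have "exp (p * (1/q - 1)) ^ k = exp (real k * (p * (1/q - 1)))" by (rule exp_of_nat_mult[symmetric])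
    hence "exp (ln q * (p * k / q)) * exp (p * (1/q - 1)) ^ k = exp (ln q * (p * k / q) + real k * (p * (1/q - 1)))"
      by (simp only: exp_add)
    also have "ln q * (p * k / q) + real k * (p * (1/q - 1)) = p * k * ((1/q - 1) + ln q / q)"
      by (simp add: algebra_simps)
    finally show ?thesis .
  qed
  also have "\<dots> = (exp (1 / q - 1) * q powr (1 / q)) powr (p * real k)"
  proof -
    have "ln (exp (1 / q - 1) * q powr (1 / q)) = (1/q - 1) + ln q / q"
      using assms by (simp add: ln_mult ln_powr)
    thus ?thesis using assms by (simp add: powr_def)
  qed
  finally show ?thesis .
qed

lemma T2:
  assumes "n > 0" and c: "real (card {i \<in> {..<n}. P (t i)}) = p * real n"
    and "0 < p" "p \<le> 1" "q > 1"
  shows "measure_pmf.prob (sample_wr n k) {s. real (hits t P k s) \<ge> q * p * k}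
          \<le> exp (- (real k * (p * q - p)\<^sup>2) / (2 * (p * (1 - p)) + 2 * (p * q - p) / 3))"
proof -
  define d where "d = p * q - p"
  define w where "w = p * (1 - p)"
  define l where "l = d / (w + d/3)"
  have d0: "d > 0" using assms unfolding d_def
    by (metis diff_gt_0_iff_gt mult.right_neutral mult_strict_left_mono)
  have w0: "w \<ge> 0" using assms unfolding w_def by simp
  have l0: "l > 0" using d0 w0 unfolding l_def by simp
  have "measure_pmf.prob (sample_wr n k) {s. real (hits t P k s) \<ge> q * p * k}
      \<le> exp (- l * (q * p * k)) * (1 - p + p * exp l) ^ k"
    by (rule markov_ge[where n=n and P=P and t=t and p=p and k=k, OF assms(1) c l0])
  also have "\<dots> \<le> exp (- l * (q * p * k)) * (exp (l*p) * exp (w * (exp l - 1 - l))) ^ k"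
  proof (intro mult_left_mono power_mono)
    have "0 \<le> p * exp l" using assms by simp
    thus "0 \<le> 1 - p + p * exp l" using assms by linarith
    show "1 - p + p * exp l \<le> exp (l*p) * exp (w * (exp l - 1 - l))"
      using L3a[of p l] assms l0 unfolding w_def by simp
  qed simp
  also have "\<dots> = exp (k * (w * (exp l - 1 - l) - l * d))"
  proof -
    have "(exp (l*p) * exp (w * (exp l - 1 - l))) ^ k = exp (real k * (l*p + w * (exp l - 1 - l)))"
      by (simp only: exp_add[symmetric] exp_of_nat_mult)
    hence "exp (- l * (q * p * k)) * (exp (l*p) * exp (w * (exp l - 1 - l))) ^ k
        = exp (- l * (q * p * k) + real k * (l*p + w * (exp l - 1 - l)))"
      by (simp only: exp_add)
    also have "- l * (q * p * k) + real k * (l*p + w * (exp l - 1 - l)) = k * (w * (exp l - 1 - l) - l * d)"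
      unfolding d_def by (simp add: algebra_simps)
    finally show ?thesis .
  qed
  also have "\<dots> \<le> exp (k * (- (d^2 / (2*w + 2*d/3))))"
  proof (rule exp_le_cancel_iff[THEN iffD2])
    show "real k * (w * (exp l - 1 - l) - l * d) \<le> real k * (- (d^2 / (2*w + 2*d/3)))"
      using Lexp[OF w0 d0, folded l_def] by (rule mult_left_mono) simp
  qed
  also have "\<dots> = exp (- (real k * (p * q - p)\<^sup>2) / (2 * (p * (1 - p)) + 2 * (p * q - p) / 3))"
    unfolding d_def w_def by simp
  finally show ?thesis .
qed

lemma T4:
  assumes "n > 0" and c: "real (card {i \<in> {..<n}. P (t i)}) = p * real n"
    and "0 < p" "p \<le> 1" "q > 1"
  shows "measure_pmf.prob (sample_wr n k) {s. real (hits t P k s) \<le> p * k / q}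
          \<le> exp (- (real k * (p - p / q)\<^sup>2) / (2 * (p * (1 - p)) + 2 * (p - p / q) / 3))"
proof -
  define d where "d = p - p / q"
  define w where "w = p * (1 - p)"
  define l where "l = d / (w + d/3)"
  have d0: "d > 0" using assms unfolding d_def by (simp add: divide_less_eq)
  have w0: "w \<ge> 0" using assms unfolding w_def by simp
  have l0: "l > 0" using d0 w0 unfolding l_def by simp
  have "measure_pmf.prob (sample_wr n k) {s. real (hits t P k s) \<le> p * k / q}
      \<le> exp (l * (p * k / q)) * (1 - p + p * exp (- l)) ^ k"
    by (rule markov_le[where n=n and P=P and t=t and p=p and k=k, OF assms(1) c l0])
  also have "\<dots> \<le> exp (l * (p * k / q)) * (exp (-l*p) * exp (w * (exp l - 1 - l))) ^ k"
  proof (intro mult_left_mono power_mono)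
    have "0 \<le> p * exp (-l)" using assms by simp
    thus "0 \<le> 1 - p + p * exp (-l)" using assms by linarith
    show "1 - p + p * exp (-l) \<le> exp (-l*p) * exp (w * (exp l - 1 - l))"
      using L3b[of p l] assms l0 unfolding w_def by simp
  qed simp
  also have "\<dots> = exp (k * (w * (exp l - 1 - l) - l * d))"
  proof -
    have "(exp (-l*p) * exp (w * (exp l - 1 - l))) ^ k = exp (real k * (-l*p + w * (exp l - 1 - l)))"
      by (simp only: exp_add[symmetric] exp_of_nat_mult)
    hence "exp (l * (p * k / q)) * (exp (-l*p) * exp (w * (exp l - 1 - l))) ^ k
        = exp (l * (p * k / q) + real k * (-l*p + w * (exp l - 1 - l)))"
      by (simp only: exp_add)
    also have "l * (p * k / q) + real k * (-l*p + w * (exp l - 1 - l)) = k * (w * (exp l - 1 - l) - l * d)"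
      unfolding d_def by (simp add: algebra_simps)
    finally show ?thesis .
  qed
  also have "\<dots> \<le> exp (k * (- (d^2 / (2*w + 2*d/3))))"
  proof (rule exp_le_cancel_iff[THEN iffD2])
    show "real k * (w * (exp l - 1 - l) - l * d) \<le> real k * (- (d^2 / (2*w + 2*d/3)))"
      using Lexp[OF w0 d0, folded l_def] by (rule mult_left_mono) simp
  qed
  also have "\<dots> = exp (- (real k * (p - p / q)\<^sup>2) / (2 * (p * (1 - p)) + 2 * (p - p / q) / 3))"
    unfolding d_def w_def by simp
  finally show ?thesis .
qed



lemma qerr_good:
  fixes e T q :: real
  assumes "T \<ge> 1" "q \<ge> 1" "e \<le> q*T" "T \<le> q*e"
  shows "qerror e T \<le> q"
proof -
  have mT: "max T 1 = T" using assms by simp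
  have m1: "max e 1 \<ge> 1" by simp
  have a: "T / max e 1 \<le> q"
  proof -
    have "T \<le> q * max e 1" using assms by (smt (verit) mult_left_mono)
    thus ?thesis using m1 by (simp add: divide_le_eq mult.commute)
  qed
  have b: "max e 1 / T \<le> q"
  proof -
    have qT: "1 \<le> q * T" using mult_mono[of 1 q 1 T] assms by simp
    have "max e 1 \<le> q * T" using qT assms(3) by (simp add: max_def)
    thus ?thesis using assms by (simp add: divide_le_eq mult.commute)
  qed
  show ?thesis unfolding qerror_def mT using a b by simp
qed

lemma event_cover:
  fixes X p q :: real and n k :: nat
  assumes "n > 0" "k > 0" "p * n \<ge> 1" "q \<ge> 1"
    and "\<not> (X \<ge> q * p * k)" "\<not> (X \<le> p * k / q)"
  shows "qerror (real n / real k * X) (p * real n) \<le> q"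
proof (rule qerr_good)
  have n0: "real n > 0" and k0: "real k > 0" using assms by auto
  have X1: "X \<le> q * p * k" and X2: "p * k / q \<le> X" using assms by auto
  have "real n / real k * X \<le> real n / real k * (q * p * k)"
    using X1 n0 k0 by (intro mult_left_mono) auto
  also have "\<dots> = q * (p * n)" using k0 by (simp add: field_simps)
  finally show "real n / real k * X \<le> q * (p * real n)" .
  have "p * n = q * (real n / real k * (p * k / q))" using k0 assms by (simp add: field_simps)
  also have "\<dots> \<le> q * (real n / real k * X)"
    using X2 n0 k0 assms by (intro mult_left_mono) auto
  finally show "p * real n \<le> q * (real n / real k * X)" .
qed (use assms in auto)

theorem theorem1:
  fixes t :: "nat \<Rightarrow> 'a" and P :: "'a \<Rightarrow> bool" and n k :: nat and p q :: real
  assumes "n > 0"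
    and "0 < p" and "p \<le> 1"
    and "real (card {i \<in> {..<n}. P (t i)}) = p * real n"
    and "k \<ge> 1"
    and "q \<ge> 1"
  shows "measure_pmf.prob (sample_wr n k)
           {s. qerror (real n / real k * real (hits t P k s)) (p * real n) \<le> q}
         \<ge> 1 - Omega_bound p q k - Psi_bound p q k"
proof (cases "q = 1")
  case True
  have "Omega_bound p q k = 1" "Psi_bound p q k = 1"
    unfolding Omega_bound_def Psi_bound_def Let_def True by simp_all
  thus ?thesis by (smt (verit) measure_nonneg)
next
  case False
  hence q1: "q > 1" using assms by simp
  note c = assms(4)
  define M where "M = sample_wr n k"
  define G where "G = {s. qerror (real n / real k * real (hits t P k s)) (p * real n) \<le> q}"
  define A where "A = {s. real (hits t P k s) \<ge> q * p * k}"
  define B where "B = {s. real (hits t P k s) \<le> p * k / q}"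
  have pn: "p * real n \<ge> 1"
  proof -
    have "real (card {i \<in> {..<n}. P (t i)}) > 0" using c assms by simp
    hence "card {i \<in> {..<n}. P (t i)} \<ge> 1" by linarith
    thus ?thesis using c by linarith
  qed
  have cover: "UNIV \<subseteq> G \<union> (A \<union> B)"
  proof
    fix s :: "nat \<Rightarrow> nat"
    show "s \<in> G \<union> (A \<union> B)"
    proof (cases "s \<in> A \<or> s \<in> B")
      case True thus ?thesis by blast
    next
      case False
      hence "\<not> (real (hits t P k s) \<ge> q * p * k)" "\<not> (real (hits t P k s) \<le> p * k / q)"
        unfolding A_def B_def by auto
      hence "qerror (real n / real k * real (hits t P k s)) (p * real n) \<le> q"
        using assms(5) by (intro event_cover[OF assms(1) _ pn assms(6)]) auto
      thus ?thesis unfolding G_def by blast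
    qed
  qed
  have "1 = measure_pmf.prob M UNIV" by simp
  also have "\<dots> \<le> measure_pmf.prob M (G \<union> (A \<union> B))"
    using cover by (intro measure_pmf.finite_measure_mono) auto
  also have "\<dots> \<le> measure_pmf.prob M G + measure_pmf.prob M (A \<union> B)"
    by (rule measure_subadditive) (auto simp: measure_pmf.emeasure_eq_measure)
  finally have h1: "1 \<le> measure_pmf.prob M G + measure_pmf.prob M (A \<union> B)" .
  have h2: "measure_pmf.prob M (A \<union> B) \<le> measure_pmf.prob M A + measure_pmf.prob M B"
    by (rule measure_subadditive) (auto simp: measure_pmf.emeasure_eq_measure)
  have h3: "measure_pmf.prob M A \<le> Omega_bound p q k"
    unfolding Omega_bound_def Let_def M_def A_def
    by (intro min.boundedI T1 T2) (use assms q1 in auto)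
  have h4: "measure_pmf.prob M B \<le> Psi_bound p q k"
    unfolding Psi_bound_def Let_def M_def B_def
    by (intro min.boundedI T3 T4) (use assms q1 in auto)
  have "measure_pmf.prob M G \<ge> 1 - Omega_bound p q k - Psi_bound p q k"
    using h1 h2 h3 h4 by linarith
  thus ?thesis unfolding M_def G_def .
qed

end
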